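(* On $\mathrm{Stem}_T^2(D,A\otimes\mathbb R^{2^\tau})$ one has $\Delta_T=\partial_T\overline\partial_T=\overline\partial_T\partial_T$.
   Context: $A$ is a finite-dimensional associative real algebra with unit and $*$-involution; $V\subseteq A$ has a basis $(v_0=1,v_1,\dots,v_N)$ with $v_s$ ($s\ge1$) satisfying $v_s^2=-1$ and pairwise anticommuting; $\mathbb R_{0,t_0}=\mathrm{Span}_{\mathbb R}(v_0,\dots,v_{t_0})$. $T=(t_0,\dots,t_\tau)$ with $0\le t_0<\dots<t_\tau=N$. $\mathscr P(\tau)$ is the power set of $\{1,\dots,\tau\}$; $\overline\beta^h$ is $\beta\in\mathbb R^\tau$ with $\beta_h$ replaced by $-\beta_h$. $D\subseteq\mathbb R_{0,t_0}\times\mathbb R^\tau$ is open and invariant under $(\alpha,\beta)\mapsto(\alpha,\overline\beta^h)$. A $T$-stem function is $F=\sum_KE_KF_K:D\to A\otimes\mathbb R^{2^\tau}$ with $F_K(\alpha,\overline\beta^h)=F_K(\alpha,\beta)$ if $h\notin K$ and $=-F_K(\alpha,\beta)$ if $h\in K$; $\mathrm{Stem}^p_T(D,A\otimes\mathbb R^{2^\tau})$ consists of those with $C^p$ components. Writing $\alpha=\sum_{s=0}^{t_0}x_sv_s$, $\partial_{\alpha_s}$, $\partial_{\beta_h}$ are partial derivatives in $x_s$, $\beta_h$; $\overline\partial_\alpha=\partial_{\alpha_0}+\sum_{s=1}^{t_0}v_s\partial_{\alpha_s}$, $\partial_\alpha=\partial_{\alpha_0}-\sum_{s=1}^{t_0}v_s\partial_{\alpha_s}$,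 $\overline\partial^u_\alpha=\partial_{\alpha_0}-(-1)^u\sum_{s=1}^{t_0}v_s\partial_{\alpha_s}$ for $u\in\mathbb N$. $\sigma(h,K)\in\{0,1\}$ is the parity of the number of elements of $K$ that are $\le h$. The operators are: $(\overline\partial_TF)_K=\overline\partial_\alpha^{|K|+1}F_K+\sum_{h=1}^\tau(-1)^{\sigma(h,K)+1}\partial_{\beta_h}F_{K\triangle\{h\}}$, $(\partial_TF)_K=\overline\partial_\alpha^{|K|}F_K+\sum_{h=1}^\tau(-1)^{\sigma(h,K)}\partial_{\beta_h}F_{K\triangle\{h\}}$, $(\Delta_TF)_K=\partial_\alpha\overline\partial_\alpha F_K+\sum_{h=1}^\tau\partial_{\beta_h}^2F_K$; they map $T$-stem functions to $T$-stem functions. *)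

theory Defs
  imports "HOL-Analysis.Analysis"
begin

text \<open>Points of \<open>D \<subseteq> R_{0,t0} \<times> R^tau\<close> are written in coordinates:
  a point is a pair \<open>(x, b)\<close> where \<open>x s\<close> (s = 0..t0) are the real coordinates of
  \<open>alpha = \<Sum>s. x s v_s\<close> and \<open>b h\<close> (h = 1..tau) are the coordinates of beta.\<close>

type_synonym pt = "(nat \<Rightarrow> real) \<times> (nat \<Rightarrow> real)"

definition stem_space :: "nat \<Rightarrow> nat \<Rightarrow> pt set" where
  "stem_space t0 tau = {(x, b). (\<forall>s>t0. x s = 0) \<and> b 0 = 0 \<and> (\<forall>h>tau. b h = 0)}"

datatype coord = CA nat | CB nat

definition coords :: "nat \<Rightarrow> nat \<Rightarrow> coord set" where
  "coords t0 tau = CA ` {0..t0} \<union> CB ` {1..tau}"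

fun getc :: "coord \<Rightarrow> pt \<Rightarrow> real" where
  "getc (CA s) (x, b) = x s"
| "getc (CB h) (x, b) = b h"

fun setc :: "coord \<Rightarrow> pt \<Rightarrow> real \<Rightarrow> pt" where
  "setc (CA s) (x, b) u = (x(s := u), b)"
| "setc (CB h) (x, b) u = (x, b(h := u))"

definition has_pd :: "coord \<Rightarrow> (pt \<Rightarrow> 'a::real_normed_vector) \<Rightarrow> pt \<Rightarrow> bool" where
  "has_pd c f p \<longleftrightarrow> (\<lambda>u. f (setc c p u)) differentiable (at (getc c p))"

definition pd :: "coord \<Rightarrow> (pt \<Rightarrow> 'a::real_normed_vector) \<Rightarrow> pt \<Rightarrow> 'a" where
  "pd c f p = vector_derivative (\<lambda>u. f (setc c p u)) (at (getc c p))"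

definition C2_on :: "nat \<Rightarrow> nat \<Rightarrow> pt set \<Rightarrow> (pt \<Rightarrow> 'a::real_normed_vector) \<Rightarrow> bool" where
  "C2_on t0 tau D f \<longleftrightarrow> continuous_on D f \<and>
     (\<forall>c\<in>coords t0 tau. (\<forall>p\<in>D. has_pd c f p) \<and> continuous_on D (pd c f) \<and>
        (\<forall>c'\<in>coords t0 tau. (\<forall>p\<in>D. has_pd c' (pd c f) p) \<and> continuous_on D (pd c' (pd c f))))"

definition stem2 :: "nat \<Rightarrow> nat \<Rightarrow> pt set \<Rightarrow> (nat set \<Rightarrow> pt \<Rightarrow> 'a::{real_normed_vector,uminus}) \<Rightarrow> bool" where
  "stem2 t0 tau D F \<longleftrightarrow>
     (\<forall>K. K \<subseteq> {1..tau} \<longrightarrow> C2_on t0 tau D (F K) \<and>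
        (\<forall>x b h. (x, b) \<in> D \<longrightarrow> h \<in> {1..tau} \<longrightarrow>
           F K (x, b(h := - b h)) = (if h \<in> K then - F K (x, b) else F K (x, b))))"

definition sgm :: "nat \<Rightarrow> nat set \<Rightarrow> nat" where
  "sgm h K = card {k \<in> K. k \<le> h} mod 2"

definition symd1 :: "nat set \<Rightarrow> nat \<Rightarrow> nat set" where
  "symd1 K h = (if h \<in> K then K - {h} else insert h K)"

definition dbaru :: "(nat \<Rightarrow> 'a::{real_normed_algebra_1}) \<Rightarrow> nat \<Rightarrow> nat \<Rightarrow> (pt \<Rightarrow> 'a) \<Rightarrow> pt \<Rightarrow> 'a" where
  "dbaru v t0 u f p = pd (CA 0) f p - ((-1::real) ^ u) *\<^sub>R (\<Sum>s=1..t0. v s * pd (CA s) f p)"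

definition dbarA :: "(nat \<Rightarrow> 'a::{real_normed_algebra_1}) \<Rightarrow> nat \<Rightarrow> (pt \<Rightarrow> 'a) \<Rightarrow> pt \<Rightarrow> 'a" where
  "dbarA v t0 f p = pd (CA 0) f p + (\<Sum>s=1..t0. v s * pd (CA s) f p)"

definition dA :: "(nat \<Rightarrow> 'a::{real_normed_algebra_1}) \<Rightarrow> nat \<Rightarrow> (pt \<Rightarrow> 'a) \<Rightarrow> pt \<Rightarrow> 'a" where
  "dA v t0 f p = pd (CA 0) f p - (\<Sum>s=1..t0. v s * pd (CA s) f p)"

definition dbarT :: "(nat \<Rightarrow> 'a::{real_normed_algebra_1}) \<Rightarrow> nat \<Rightarrow> nat \<Rightarrow>
    (nat set \<Rightarrow> pt \<Rightarrow> 'a) \<Rightarrow> nat set \<Rightarrow> pt \<Rightarrow> 'a" where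
  "dbarT v t0 tau F K p = dbaru v t0 (card K + 1) (F K) p +
     (\<Sum>h=1..tau. ((-1::real) ^ (sgm h K + 1)) *\<^sub>R pd (CB h) (F (symd1 K h)) p)"

definition dT :: "(nat \<Rightarrow> 'a::{real_normed_algebra_1}) \<Rightarrow> nat \<Rightarrow> nat \<Rightarrow>
    (nat set \<Rightarrow> pt \<Rightarrow> 'a) \<Rightarrow> nat set \<Rightarrow> pt \<Rightarrow> 'a" where
  "dT v t0 tau F K p = dbaru v t0 (card K) (F K) p +
     (\<Sum>h=1..tau. ((-1::real) ^ (sgm h K)) *\<^sub>R pd (CB h) (F (symd1 K h)) p)"

definition LapT :: "(nat \<Rightarrow> 'a::{real_normed_algebra_1}) \<Rightarrow> nat \<Rightarrow> nat \<Rightarrow>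
    (nat set \<Rightarrow> pt \<Rightarrow> 'a) \<Rightarrow> nat set \<Rightarrow> pt \<Rightarrow> 'a" where
  "LapT v t0 tau F K p = dA v t0 (dbarA v t0 (F K)) p +
     (\<Sum>h=1..tau. pd (CB h) (pd (CB h) (F K)) p)"

end

theory Submission
  imports Defs
begin


lemma getc_setc[simp]: "getc c (setc c q u) = u"
  by (cases c; cases q) auto

lemma setc_setc[simp]: "setc c (setc c q u) w = setc c q w"
  by (cases c; cases q) auto

lemma setc_getc[simp]: "setc c q (getc c q) = q"
  by (cases c; cases q) auto

lemma getc_setc_other: "c \<noteq> c' \<Longrightarrow> getc c (setc c' q u) = getc c q"
  by (cases c; cases c'; cases q) auto

lemma setc_comm: "c \<noteq> c' \<Longrightarrow> setc c (setc c' q u) w = setc c' (setc c q w) u"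
  by (cases c; cases c'; cases q) (auto simp: fun_upd_twist)

lemma setc_stem: "c \<in> coords t0 tau \<Longrightarrow> q \<in> stem_space t0 tau \<Longrightarrow> setc c q u \<in> stem_space t0 tau"
  by (cases c; cases q) (auto simp: coords_def stem_space_def)

lemma setc_CA: "setc (CA s) q u = ((fst q)(s := u), snd q)"
  by (cases q) auto
lemma setc_CB: "setc (CB s) q u = (fst q, (snd q)(s := u))"
  by (cases q) auto

lemma continuous_on_fun_upd_real:
  fixes Q :: "'b::topological_space \<Rightarrow> nat \<Rightarrow> real"
  assumes "continuous_on S Q" "continuous_on S R"
  shows "continuous_on S (\<lambda>z. (Q z)(s := R z))"
proof (rule continuous_on_coordinatewise_then_product)
  fix i
  show "continuous_on S (\<lambda>z. ((Q z)(s := R z)) i)"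
    using assms continuous_on_product_then_coordinatewise[OF assms(1), of i]
    by (cases "i = s") auto
qed

lemma continuous_on_setc:
  fixes Q :: "'b::topological_space \<Rightarrow> pt"
  assumes "continuous_on S Q" "continuous_on S R"
  shows "continuous_on S (\<lambda>z. setc c (Q z) (R z))"
proof (cases c)
  case (CA s)
  show ?thesis unfolding CA setc_CA
    by (intro continuous_on_Pair continuous_on_fun_upd_real assms continuous_on_fst continuous_on_snd)
next
  case (CB s)
  show ?thesis unfolding CB setc_CB
    by (intro continuous_on_Pair continuous_on_fun_upd_real assms continuous_on_fst continuous_on_snd)
qed


lemma pd_works: "has_pd c f p \<Longrightarrow> ((\<lambda>u. f (setc c p u)) has_vector_derivative pd c f p) (at (getc c p))"
  unfolding has_pd_def pd_def by (rule vector_derivative_works[THEN iffD1])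

lemma pd_eqI: "((\<lambda>u. f (setc c p u)) has_vector_derivative d) (at (getc c p)) \<Longrightarrow> pd c f p = d"
  unfolding pd_def by (rule vector_derivative_at)

lemma has_pdI: "((\<lambda>u. f (setc c p u)) has_vector_derivative d) (at (getc c p)) \<Longrightarrow> has_pd c f p"
  unfolding has_pd_def by (auto simp: differentiable_def has_vector_derivative_def)

lemma pd_add:
  assumes "has_pd c f p" "has_pd c g p"
  shows "has_pd c (\<lambda>q. f q + g q) p" "pd c (\<lambda>q. f q + g q) p = pd c f p + pd c g p"
  using has_vector_derivative_add[OF pd_works[OF assms(1)] pd_works[OF assms(2)]]
  by (auto intro: has_pdI pd_eqI)

lemma pd_diff:
  assumes "has_pd c f p" "has_pd c g p"
  shows "has_pd c (\<lambda>q. f q - g q) p" "pd c (\<lambda>q. f q - g q) p = pd c f p - pd c g p"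
  using has_vector_derivative_diff[OF pd_works[OF assms(1)] pd_works[OF assms(2)]]
  by (auto intro: has_pdI pd_eqI)

lemma pd_scaleR:
  assumes "has_pd c f p"
  shows "has_pd c (\<lambda>q. r *\<^sub>R f q) p" "pd c (\<lambda>q. r *\<^sub>R f q) p = r *\<^sub>R pd c f p"
  using bounded_linear.has_vector_derivative[OF bounded_linear_scaleR_right pd_works[OF assms(1)], of r]
  by (auto intro: has_pdI pd_eqI)

lemma pd_mult_left:
  fixes f :: "pt \<Rightarrow> 'a::real_normed_algebra"
  assumes "has_pd c f p"
  shows "has_pd c (\<lambda>q. a * f q) p" "pd c (\<lambda>q. a * f q) p = a * pd c f p"
  using has_vector_derivative_mult_right[OF pd_works[OF assms(1)], of a]
  by (auto intro: has_pdI pd_eqI)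

lemma pd_sum:
  fixes f :: "'i \<Rightarrow> pt \<Rightarrow> 'a::real_normed_vector"
  assumes "finite I" "\<And>i. i \<in> I \<Longrightarrow> has_pd c (f i) p"
  shows "has_pd c (\<lambda>q. \<Sum>i\<in>I. f i q) p \<and> pd c (\<lambda>q. \<Sum>i\<in>I. f i q) p = (\<Sum>i\<in>I. pd c (f i) p)"
  using assms
proof (induction I rule: finite_induct)
  case empty
  have "((\<lambda>u. 0::'a) has_vector_derivative 0) (at (getc c p))" by (rule has_vector_derivative_const)
  then show ?case using has_pdI[of "\<lambda>q. 0::'a" c p 0] pd_eqI[of "\<lambda>q. 0::'a" c p 0] by simp
next
  case (insert x F)
  then have h: "has_pd c (\<lambda>q. \<Sum>i\<in>F. f i q) p" "pd c (\<lambda>q. \<Sum>i\<in>F. f i q) p = (\<Sum>i\<in>F. pd c (f i) p)"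
    by auto
  have hx: "has_pd c (f x) p" using insert by auto
  show ?case using insert pd_add[OF hx h(1)] h(2) by simp
qed



lemma norm3: "norm (a - b + c) \<le> norm a + norm b + norm (c::'a::real_normed_vector)"
  using norm_triangle_ineq[of "a-b" c] norm_triangle_ineq4[of a b] by linarith

lemma schwarz_abs:
  fixes g gx gy gxy :: "real \<Rightarrow> real \<Rightarrow> 'a::real_normed_vector"
  assumes e: "e > 0"
    and dx: "\<And>x y. \<bar>x - a\<bar> < e \<Longrightarrow> \<bar>y - b\<bar> < e \<Longrightarrow> ((\<lambda>x'. g x' y) has_vector_derivative gx x y) (at x)"
    and dy: "\<And>x y. \<bar>x - a\<bar> < e \<Longrightarrow> \<bar>y - b\<bar> < e \<Longrightarrow> ((\<lambda>y'. g x y') has_vector_derivative gy x y) (at y)"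
    and dxy: "\<And>x y. \<bar>x - a\<bar> < e \<Longrightarrow> \<bar>y - b\<bar> < e \<Longrightarrow> ((\<lambda>y'. gx x y') has_vector_derivative gxy x y) (at y)"
    and cont: "\<And>\<epsilon>. \<epsilon> > 0 \<Longrightarrow> \<exists>\<delta>>0. \<forall>x y. \<bar>x - a\<bar> < \<delta> \<longrightarrow> \<bar>y - b\<bar> < \<delta> \<longrightarrow> norm (gxy x y - gxy a b) \<le> \<epsilon>"
  shows "((\<lambda>x. gy x b) has_vector_derivative gxy a b) (at a)"
  unfolding has_vector_derivative_def has_derivative_at_alt
proof (intro conjI allI impI bounded_linear_scaleR_left)
  fix \<epsilon> :: real assume "\<epsilon> > 0"
  define \<epsilon>' where "\<epsilon>' = \<epsilon> / 9"
  have "\<epsilon>' > 0" using \<open>\<epsilon> > 0\<close> by (simp add: \<epsilon>'_def)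
  obtain \<delta> where "\<delta> > 0" and \<delta>: "\<And>x y. \<bar>x - a\<bar> < \<delta> \<Longrightarrow> \<bar>y - b\<bar> < \<delta> \<Longrightarrow> norm (gxy x y - gxy a b) \<le> \<epsilon>'"
    using cont[OF \<open>\<epsilon>' > 0\<close>] by blast
  define r where "r = min e \<delta>"
  have "r > 0" using e \<open>\<delta> > 0\<close> by (simp add: r_def)
  let ?L = "gxy a b"
  have A: "norm (gx s y - gx s b - (y - b) *\<^sub>R ?L) \<le> 3 * \<epsilon>' * \<bar>y - b\<bar>"
    if s: "\<bar>s - a\<bar> < r" and y: "\<bar>y - b\<bar> < r" for s y
  proof -
    have seg: "\<And>z. z \<in> closed_segment b y \<Longrightarrow> \<bar>z - b\<bar> < r"
      using y by (auto simp: closed_segment_eq_real_ivl split: if_splits)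
    have "norm (gx s y - gx s b - (y - b) *\<^sub>R gxy s b) \<le> norm (y - b) * (2 * \<epsilon>')"
    proof (rule vector_differentiable_bound_linearization[where S = "closed_segment b y"])
      fix z assume "z \<in> closed_segment b y"
      then have "\<bar>z - b\<bar> < r" by (rule seg)
      then show "((gx s) has_vector_derivative gxy s z) (at z within closed_segment b y)"
        using dxy[of s z] s by (auto simp: r_def intro: has_vector_derivative_at_within)
    next
      fix z assume "z \<in> closed_segment b y"
      then have "\<bar>z - b\<bar> < r" by (rule seg)
      then have "norm (gxy s z - ?L) \<le> \<epsilon>'" "norm (gxy s b - ?L) \<le> \<epsilon>'"
        using \<delta> s \<open>r > 0\<close> by (auto simp: r_def)
      then show "norm (gxy s z - gxy s b) \<le> 2 * \<epsilon>'"
        using norm_triangle_ineq4[of "gxy s z - ?L" "gxy s b - ?L"] by simp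
    qed auto
    moreover have "norm ((y - b) *\<^sub>R (gxy s b - ?L)) \<le> \<bar>y - b\<bar> * \<epsilon>'"
      using \<delta> s \<open>r > 0\<close> by (auto simp: r_def intro!: mult_left_mono)
    ultimately show ?thesis
      using norm_triangle_ineq[of "gx s y - gx s b - (y - b) *\<^sub>R gxy s b" "(y - b) *\<^sub>R (gxy s b - ?L)"]
      by (simp add: algebra_simps)
  qed
  have B: "norm ((g x y - g x b) - (g a y - g a b) - ((x - a) * (y - b)) *\<^sub>R ?L) \<le> 9 * \<epsilon>' * \<bar>x - a\<bar> * \<bar>y - b\<bar>"
    if x: "\<bar>x - a\<bar> < r" and y: "\<bar>y - b\<bar> < r" for x y
  proof -
    define \<phi> where "\<phi> = (\<lambda>z. g z y - g z b)"
    define \<phi>' where "\<phi>' z = gx z y - gx z b" for z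
    have seg: "\<And>z. z \<in> closed_segment a x \<Longrightarrow> \<bar>z - a\<bar> < r"
      using x by (auto simp: closed_segment_eq_real_ivl split: if_splits)
    have "norm (\<phi> x - \<phi> a - (x - a) *\<^sub>R \<phi>' a) \<le> norm (x - a) * (6 * \<epsilon>' * \<bar>y - b\<bar>)"
    proof (rule vector_differentiable_bound_linearization[where S = "closed_segment a x"])
      fix z assume "z \<in> closed_segment a x"
      then have "\<bar>z - a\<bar> < r" by (rule seg)
      then have z: "\<bar>z - a\<bar> < e" by (simp add: r_def)
      have y': "\<bar>y - b\<bar> < e" "\<bar>b - b\<bar> < e" using y e by (auto simp: r_def)
      show "(\<phi> has_vector_derivative \<phi>' z) (at z within closed_segment a x)"
        unfolding \<phi>_def \<phi>'_def
        by (rule has_vector_derivative_at_within[OF has_vector_derivative_diff[OF dx[OF z y'(1)] dx[OF z y'(2)]]])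
    next
      fix z assume "z \<in> closed_segment a x"
      then have "\<bar>z - a\<bar> < r" by (rule seg)
      then have "norm (\<phi>' z - (y - b) *\<^sub>R ?L) \<le> 3 * \<epsilon>' * \<bar>y - b\<bar>"
        "norm (\<phi>' a - (y - b) *\<^sub>R ?L) \<le> 3 * \<epsilon>' * \<bar>y - b\<bar>"
        using A[of z y] A[of a y] y \<open>r > 0\<close> \<open>\<bar>z - a\<bar> < r\<close> by (simp_all add: \<phi>'_def)
      then show "norm (\<phi>' z - \<phi>' a) \<le> 6 * \<epsilon>' * \<bar>y - b\<bar>"
        using norm_triangle_ineq4[of "\<phi>' z - (y - b) *\<^sub>R ?L" "\<phi>' a - (y - b) *\<^sub>R ?L"] by simp
    qed auto
    then have "norm (\<phi> x - \<phi> a - (x - a) *\<^sub>R \<phi>' a) \<le> \<bar>x - a\<bar> * (6 * \<epsilon>' * \<bar>y - b\<bar>)"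
      by simp
    moreover have "norm ((x - a) *\<^sub>R (\<phi>' a - (y - b) *\<^sub>R ?L)) \<le> \<bar>x - a\<bar> * (3 * \<epsilon>' * \<bar>y - b\<bar>)"
    proof -
      have "norm (\<phi>' a - (y - b) *\<^sub>R ?L) \<le> 3 * \<epsilon>' * \<bar>y - b\<bar>"
        using A[of a y] y \<open>r > 0\<close> by (simp add: \<phi>'_def)
      then show ?thesis by (simp add: mult_left_mono)
    qed
    ultimately have "norm ((\<phi> x - \<phi> a - (x - a) *\<^sub>R \<phi>' a) + (x - a) *\<^sub>R (\<phi>' a - (y - b) *\<^sub>R ?L)) \<le> \<bar>x - a\<bar> * (6 * \<epsilon>' * \<bar>y - b\<bar>) + \<bar>x - a\<bar> * (3 * \<epsilon>' * \<bar>y - b\<bar>)"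
      using norm_triangle_ineq[of "\<phi> x - \<phi> a - (x - a) *\<^sub>R \<phi>' a" "(x - a) *\<^sub>R (\<phi>' a - (y - b) *\<^sub>R ?L)"]
      by linarith
    moreover have "\<bar>x - a\<bar> * (6 * \<epsilon>' * \<bar>y - b\<bar>) + \<bar>x - a\<bar> * (3 * \<epsilon>' * \<bar>y - b\<bar>) = 9 * \<epsilon>' * \<bar>x - a\<bar> * \<bar>y - b\<bar>"
      by (simp add: algebra_simps)
    moreover have "(\<phi> x - \<phi> a - (x - a) *\<^sub>R \<phi>' a) + (x - a) *\<^sub>R (\<phi>' a - (y - b) *\<^sub>R ?L)
        = (g x y - g x b) - (g a y - g a b) - ((x - a) * (y - b)) *\<^sub>R ?L"
      by (simp add: \<phi>_def algebra_simps)
    ultimately show ?thesis by metis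
  qed
  show "\<exists>d>0. \<forall>x. norm (x - a) < d \<longrightarrow> norm (gy x b - gy a b - (x - a) *\<^sub>R ?L) \<le> \<epsilon> * norm (x - a)"
  proof (intro exI[of _ r] conjI allI impI \<open>r > 0\<close>)
    fix x assume "norm (x - a) < r"
    then have x: "\<bar>x - a\<bar> < r" by simp
    show "norm (gy x b - gy a b - (x - a) *\<^sub>R ?L) \<le> \<epsilon> * norm (x - a)"
    proof (rule field_le_epsilon)
      fix \<eta>0 :: real assume "\<eta>0 > 0"
      define \<eta> where "\<eta> = \<eta>0 / 2"
      have "\<eta> > 0" using \<open>\<eta>0 > 0\<close> by (simp add: \<eta>_def)
      have "((\<lambda>y'. g x y') has_derivative (\<lambda>k. k *\<^sub>R gy x b)) (at b)"
        using dy[of x b] x e by (simp add: r_def has_vector_derivative_def)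
      then obtain d1 where "d1 > 0" and d1: "\<And>y. norm (y - b) < d1 \<Longrightarrow> norm (g x y - g x b - (y - b) *\<^sub>R gy x b) \<le> \<eta> * norm (y - b)"
        using \<open>\<eta> > 0\<close> unfolding has_derivative_at_alt by blast
      have "((\<lambda>y'. g a y') has_derivative (\<lambda>k. k *\<^sub>R gy a b)) (at b)"
        using dy[of a b] e by (simp add: has_vector_derivative_def)
      then obtain d2 where "d2 > 0" and d2: "\<And>y. norm (y - b) < d2 \<Longrightarrow> norm (g a y - g a b - (y - b) *\<^sub>R gy a b) \<le> \<eta> * norm (y - b)"
        using \<open>\<eta> > 0\<close> unfolding has_derivative_at_alt by blast
      define k where "k = min r (min d1 d2) / 2"
      have k: "k > 0" "k < r" "k < d1" "k < d2"
        using \<open>r > 0\<close> \<open>d1 > 0\<close> \<open>d2 > 0\<close> by (auto simp: k_def)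
      let ?y = "b + k"
      have n1: "norm (g x ?y - g x b - k *\<^sub>R gy x b) \<le> \<eta> * k" using d1[of ?y] k by simp
      have n2: "norm (g a ?y - g a b - k *\<^sub>R gy a b) \<le> \<eta> * k" using d2[of ?y] k by simp
      have n3: "norm ((g x ?y - g x b) - (g a ?y - g a b) - ((x - a) * k) *\<^sub>R ?L) \<le> 9 * \<epsilon>' * \<bar>x - a\<bar> * k"
        using B[of x ?y] x k by simp
      have eq: "k *\<^sub>R (gy x b - gy a b - (x - a) *\<^sub>R ?L) =
          ((g x ?y - g x b) - (g a ?y - g a b) - ((x - a) * k) *\<^sub>R ?L)
          - (g x ?y - g x b - k *\<^sub>R gy x b) + (g a ?y - g a b - k *\<^sub>R gy a b)"
        by (simp add: algebra_simps)
      have "norm (k *\<^sub>R (gy x b - gy a b - (x - a) *\<^sub>R ?L)) \<le> 9 * \<epsilon>' * \<bar>x - a\<bar> * k + \<eta> * k + \<eta> * k"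
        unfolding eq using norm3 n1 n2 n3 by (smt (verit))
      moreover have "norm (k *\<^sub>R (gy x b - gy a b - (x - a) *\<^sub>R ?L)) = k * norm (gy x b - gy a b - (x - a) *\<^sub>R ?L)"
        using k by simp
      moreover have "9 * \<epsilon>' * \<bar>x - a\<bar> * k + \<eta> * k + \<eta> * k = k * (9 * \<epsilon>' * \<bar>x - a\<bar> + 2 * \<eta>)"
        by (simp add: algebra_simps)
      ultimately have "k * norm (gy x b - gy a b - (x - a) *\<^sub>R ?L) \<le> k * (9 * \<epsilon>' * \<bar>x - a\<bar> + 2 * \<eta>)"
        by linarith
      then have "norm (gy x b - gy a b - (x - a) *\<^sub>R ?L) \<le> 9 * \<epsilon>' * \<bar>x - a\<bar> + 2 * \<eta>"
        using k by simp
      then show "norm (gy x b - gy a b - (x - a) *\<^sub>R ?L) \<le> \<epsilon> * norm (x - a) + \<eta>0"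
        by (simp add: \<epsilon>'_def \<eta>_def)
    qed
  qed
qed



lemma C2D:
  assumes "C2_on t0 tau D f" "c \<in> coords t0 tau" "c' \<in> coords t0 tau"
  shows "\<And>q. q \<in> D \<Longrightarrow> has_pd c f q" "\<And>q. q \<in> D \<Longrightarrow> has_pd c' (pd c f) q"
    "continuous_on D (pd c' (pd c f))"
  using assms unfolding C2_on_def by blast+

lemma box_dist:
  fixes x y a b :: real
  assumes "\<bar>x - a\<bar> < e/2" "\<bar>y - b\<bar> < e/2"
  shows "dist (a, b) (x, y) < e"
proof -
  have "dist (a, b) (x, y) = sqrt ((a - x)\<^sup>2 + (b - y)\<^sup>2)"
    by (simp add: dist_Pair_Pair dist_real_def)
  also have "\<dots> \<le> \<bar>a - x\<bar> + \<bar>b - y\<bar>" by (rule sqrt_sum_squares_le_sum_abs)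
  also have "\<dots> < e" using assms by linarith
  finally show ?thesis .
qed

lemma pd_swap:
  fixes f :: "pt \<Rightarrow> 'a::real_normed_vector"
  assumes Dsub: "D \<subseteq> stem_space t0 tau" and Dopen: "openin (top_of_set (stem_space t0 tau)) D"
    and C2: "C2_on t0 tau D f" and c: "c \<in> coords t0 tau" and c': "c' \<in> coords t0 tau" and p: "p \<in> D"
  shows "pd c (pd c' f) p = pd c' (pd c f) p"
proof (cases "c = c'")
  case True then show ?thesis by simp
next
  case False
  define \<Psi> where "\<Psi> = (\<lambda>z::real\<times>real. setc c (setc c' p (snd z)) (fst z))"
  define a where "a = getc c p"
  define b where "b = getc c' p"
  have \<Psi>ab: "\<Psi> (a, b) = p" by (simp add: \<Psi>_def a_def b_def)
  have \<Psi>cont: "continuous_on UNIV \<Psi>" unfolding \<Psi>_def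
    by (intro continuous_on_setc continuous_on_const continuous_on_fst continuous_on_snd continuous_on_id)
  have pst: "p \<in> stem_space t0 tau" using p Dsub by auto
  have \<Psi>stem: "\<Psi> z \<in> stem_space t0 tau" for z
    unfolding \<Psi>_def by (intro setc_stem c c' pst)
  obtain U where U: "open U" "D = stem_space t0 tau \<inter> U" using Dopen by (auto simp: openin_open)
  define W where "W = \<Psi> -` U"
  have oW: "open W" unfolding W_def by (rule open_vimage[OF U(1) \<Psi>cont])
  have \<Psi>W: "\<Psi> z \<in> D" if "z \<in> W" for z using that \<Psi>stem U(2) by (auto simp: W_def)
  have abW: "(a, b) \<in> W" using p \<Psi>ab U(2) by (auto simp: W_def)
  obtain e0 where "e0 > 0" and e0: "ball (a, b) e0 \<subseteq> W" using oW abW open_contains_ball by blast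
  define e where "e = e0 / 2"
  have "e > 0" using \<open>e0 > 0\<close> by (simp add: e_def)
  have inD: "\<Psi> (x, y) \<in> D" if "\<bar>x - a\<bar> < e" "\<bar>y - b\<bar> < e" for x y
    using box_dist[of x a e0 y b] that e0 \<Psi>W by (auto simp: e_def)
  let ?h = "pd c' (pd c f)"
  have hcont: "continuous_on D ?h" using C2D(3)[OF C2 c c'] .
  have "continuous_on W (?h \<circ> \<Psi>)"
    by (rule continuous_on_compose[OF continuous_on_subset[OF \<Psi>cont] continuous_on_subset[OF hcont]])
       (use \<Psi>W in auto)
  then have "isCont (?h \<circ> \<Psi>) (a, b)" using oW abW continuous_on_eq_continuous_at by blast
  then have ct: "\<forall>\<epsilon>>0. \<exists>\<delta>>0. \<forall>z. dist z (a, b) < \<delta> \<longrightarrow> dist (?h (\<Psi> z)) (?h (\<Psi> (a, b))) < \<epsilon>"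
    unfolding continuous_at_eps_delta by simp
  have cont: "\<exists>\<delta>>0. \<forall>x y. \<bar>x - a\<bar> < \<delta> \<longrightarrow> \<bar>y - b\<bar> < \<delta> \<longrightarrow> norm (?h (\<Psi> (x, y)) - ?h (\<Psi> (a, b))) \<le> \<epsilon>"
    if eps: "\<epsilon> > 0" for \<epsilon>
  proof -
    obtain \<delta> where "\<delta> > 0" and \<delta>: "\<And>z. dist z (a, b) < \<delta> \<Longrightarrow> dist (?h (\<Psi> z)) (?h (\<Psi> (a, b))) < \<epsilon>"
      using ct eps by blast
    show ?thesis
    proof (intro exI[of _ "\<delta>/2"] conjI allI impI)
      show "\<delta>/2 > 0" using \<open>\<delta> > 0\<close> by simp
      fix x y assume "\<bar>x - a\<bar> < \<delta>/2" "\<bar>y - b\<bar> < \<delta>/2"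
      then have "dist (x, y) (a, b) < \<delta>" using box_dist[of x a \<delta> y b] by (simp add: dist_commute)
      then show "norm (?h (\<Psi> (x, y)) - ?h (\<Psi> (a, b))) \<le> \<epsilon>" using \<delta> by (simp add: dist_norm less_imp_le)
    qed
  qed
  have getc1: "getc c (\<Psi> (x, y)) = x" for x y by (simp add: \<Psi>_def)
  have getc2: "getc c' (\<Psi> (x, y)) = y" for x y
    using False by (simp add: \<Psi>_def getc_setc_other[of c' c])
  have setc1: "setc c (\<Psi> (x, y)) u = \<Psi> (u, y)" for x y u by (simp add: \<Psi>_def)
  have setc2: "setc c' (\<Psi> (x, y)) u = \<Psi> (x, u)" for x y u
    using False by (simp add: \<Psi>_def setc_comm[of c' c])
  have main: "((\<lambda>x. pd c' f (\<Psi> (x, b))) has_vector_derivative ?h (\<Psi> (a, b))) (at a)"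
  proof (rule schwarz_abs[where g = "\<lambda>x y. f (\<Psi> (x, y))" and gx = "\<lambda>x y. pd c f (\<Psi> (x, y))"
        and gxy = "\<lambda>x y. ?h (\<Psi> (x, y))", OF \<open>e > 0\<close>])
    fix x y assume xy: "\<bar>x - a\<bar> < e" "\<bar>y - b\<bar> < e"
    have q: "\<Psi> (x, y) \<in> D" using inD[OF xy] .
    show "((\<lambda>x'. f (\<Psi> (x', y))) has_vector_derivative pd c f (\<Psi> (x, y))) (at x)"
      using pd_works[OF C2D(1)[OF C2 c c' q]] by (simp add: getc1 setc1)
    show "((\<lambda>y'. f (\<Psi> (x, y'))) has_vector_derivative pd c' f (\<Psi> (x, y))) (at y)"
      using pd_works[OF C2D(1)[OF C2 c' c q]] by (simp add: getc2 setc2)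
    show "((\<lambda>y'. pd c f (\<Psi> (x, y'))) has_vector_derivative ?h (\<Psi> (x, y))) (at y)"
      using pd_works[OF C2D(2)[OF C2 c c' q]] by (simp add: getc2 setc2)
  next
    fix \<epsilon> :: real assume "\<epsilon> > 0"
    then show "\<exists>\<delta>>0. \<forall>x y. \<bar>x - a\<bar> < \<delta> \<longrightarrow> \<bar>y - b\<bar> < \<delta> \<longrightarrow> norm (?h (\<Psi> (x, y)) - ?h (\<Psi> (a, b))) \<le> \<epsilon>"
      by (rule cont)
  qed
  have "\<Psi> (x, b) = setc c p x" for x by (simp add: \<Psi>_def b_def)
  then have "((\<lambda>u. pd c' f (setc c p u)) has_vector_derivative ?h p) (at (getc c p))"
    using main \<Psi>ab by (simp add: a_def)
  then show ?thesis by (rule pd_eqI)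
qed



lemma neg1_mod2: "(-1::real) ^ (n mod 2) = (-1) ^ n"
  by (simp add: minus_one_power_iff)

lemma sgm_pow: "(-1::real) ^ sgm h K = (-1) ^ card {k \<in> K. k \<le> h}"
  unfolding sgm_def by (rule neg1_mod2)

lemma neg1_pred: "n \<ge> 1 \<Longrightarrow> (-1::real) ^ (n - 1) = - ((-1) ^ n)"
  by (cases n) auto

lemma cnt_symd_le:
  assumes "finite K" "h \<le> j"
  shows "(-1::real) ^ card {k \<in> symd1 K h. k \<le> j} = - ((-1) ^ card {k \<in> K. k \<le> j})"
proof (cases "h \<in> K")
  case True
  define A where "A = {k \<in> K. k \<le> j}"
  have eq: "{k \<in> symd1 K h. k \<le> j} = A - {h}" using True by (auto simp: symd1_def A_def)
  have hA: "h \<in> A" using True assms by (simp add: A_def)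
  have fA: "finite A" using assms by (simp add: A_def)
  have c1: "card (A - {h}) = card A - 1" using hA fA by (simp add: card_Diff_singleton)
  have "card A \<noteq> 0" using hA fA by auto
  then have c2: "card A \<ge> 1" by simp
  show ?thesis unfolding eq A_def[symmetric] c1 using c2 by (rule neg1_pred)
next
  case False
  define A where "A = {k \<in> K. k \<le> j}"
  have eq: "{k \<in> symd1 K h. k \<le> j} = insert h A" using False assms by (auto simp: symd1_def A_def)
  have fA: "finite A" using assms by (simp add: A_def)
  have "h \<notin> A" using False by (simp add: A_def)
  then show ?thesis unfolding eq A_def[symmetric] using fA by simp
qed

lemma cnt_symd_gt: "j < h \<Longrightarrow> {k \<in> symd1 K h. k \<le> j} = {k \<in> K. k \<le> j}"
  by (auto simp: symd1_def)

lemma sign_swap: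
  assumes "finite K" "h \<noteq> j"
  shows "(-1::real) ^ (sgm h K + sgm j (symd1 K h)) = - ((-1) ^ (sgm j K + sgm h (symd1 K j)))"
proof (cases "h < j")
  case True
  then show ?thesis
    using cnt_symd_le[OF assms(1), of h j] cnt_symd_gt[of h j K]
    by (simp add: power_add sgm_pow)
next
  case False
  then have "j < h" using assms by simp
  then show ?thesis
    using cnt_symd_le[OF assms(1), of j h] cnt_symd_gt[of j h K]
    by (simp add: power_add sgm_pow)
qed

lemma sign_diag:
  assumes "finite K"
  shows "(-1::real) ^ (sgm h K + sgm h (symd1 K h)) = -1"
proof -
  have "(-1::real) ^ (sgm h K + sgm h (symd1 K h)) = - (((-1::real) ^ card {k \<in> K. k \<le> h}) * ((-1) ^ card {k \<in> K. k \<le> h}))"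
    using cnt_symd_le[OF assms, of h h] by (simp add: power_add sgm_pow)
  also have "\<dots> = - ((-1::real) ^ (2 * card {k \<in> K. k \<le> h}))"
    by (simp add: power_mult power2_eq_square mult_2 power_add)
  also have "\<dots> = -1" by simp
  finally show ?thesis .
qed

lemma symd1_symd1_same[simp]: "symd1 (symd1 K h) h = K"
  by (auto simp: symd1_def)

lemma symd1_comm: "symd1 (symd1 K h) j = symd1 (symd1 K j) h"
  by (auto simp: symd1_def)

lemma symd1_sub: "L \<subseteq> {1..tau} \<Longrightarrow> h \<in> {1..tau} \<Longrightarrow> symd1 L h \<subseteq> {1..tau}"
  by (auto simp: symd1_def)

lemma card_symd1_sign:
  assumes "finite K"
  shows "(-1::real) ^ card (symd1 K h) = - ((-1) ^ card K)"
proof (cases "h \<in> K")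
  case True
  have "card K \<noteq> 0" using True assms by auto
  then have "card K \<ge> 1" by simp
  then show ?thesis using True assms neg1_pred[of "card K"] by (simp add: symd1_def card_Diff_singleton)
next
  case False
  then show ?thesis using assms by (simp add: symd1_def)
qed

lemma odd_sign: "odd (m + n) \<Longrightarrow> (-1::real) ^ m = - ((-1) ^ n)"
  by (cases "even m") auto

lemma real_vector_self_neg: "(S::'a::real_vector) = - S \<Longrightarrow> S = 0"
proof -
  assume a: "S = - S"
  have "S + S = S + (- S)" using a by (rule arg_cong[where f="\<lambda>x. S + x"])
  then have "S + S = 0" by simp
  then have "(2::real) *\<^sub>R S = 0" by (simp add: scaleR_2)
  then show "S = 0" by simp
qed

lemma sum_antisym:
  fixes r :: "nat \<Rightarrow> nat \<Rightarrow> 'a::real_vector"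
  assumes "finite I" "\<And>h j. h \<in> I \<Longrightarrow> j \<in> I \<Longrightarrow> r j h = - r h j"
  shows "(\<Sum>h\<in>I. \<Sum>j\<in>I. r h j) = 0"
proof -
  have "(\<Sum>h\<in>I. \<Sum>j\<in>I. r h j) = (\<Sum>j\<in>I. \<Sum>h\<in>I. r h j)" by (rule sum.swap)
  also have "\<dots> = (\<Sum>j\<in>I. \<Sum>h\<in>I. - r j h)"
    by (intro sum.cong refl, rule assms(2)) auto
  also have "\<dots> = - (\<Sum>j\<in>I. \<Sum>h\<in>I. r j h)" by (simp add: sum_negf)
  finally show ?thesis by (rule real_vector_self_neg)
qed

lemma double_sum:
  fixes Y :: "nat \<Rightarrow> nat \<Rightarrow> nat set \<Rightarrow> 'a::real_vector"
  assumes K: "K \<subseteq> {1..tau}"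
    and symY: "\<And>h j M. h \<in> {1..tau} \<Longrightarrow> j \<in> {1..tau} \<Longrightarrow> M \<subseteq> {1..tau} \<Longrightarrow> Y h j M = Y j h M"
  shows "(\<Sum>h=1..tau. \<Sum>j=1..tau. (-1::real) ^ (sgm h K + sgm j (symd1 K h)) *\<^sub>R Y h j (symd1 (symd1 K h) j))
        = - (\<Sum>h=1..tau. Y h h K)"
proof -
  have fin: "finite K" using K finite_subset by blast
  define f where "f h j = (-1::real) ^ (sgm h K + sgm j (symd1 K h)) *\<^sub>R Y h j (symd1 (symd1 K h) j)" for h j
  define d where "d h j = (if h = j then f h h else 0)" for h j
  define r where "r h j = (if h = j then 0 else f h j)" for h j
  have "(\<Sum>h=1..tau. \<Sum>j=1..tau. f h j) = (\<Sum>h=1..tau. \<Sum>j=1..tau. d h j + r h j)"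
    by (intro sum.cong refl) (simp add: d_def r_def)
  also have "\<dots> = (\<Sum>h=1..tau. \<Sum>j=1..tau. d h j) + (\<Sum>h=1..tau. \<Sum>j=1..tau. r h j)"
    by (simp add: sum.distrib)
  also have "(\<Sum>h=1..tau. \<Sum>j=1..tau. r h j) = 0"
  proof (rule sum_antisym)
    fix h j assume hj: "h \<in> {1..tau}" "j \<in> {1..tau}"
    show "r j h = - r h j"
    proof (cases "h = j")
      case True then show ?thesis by (simp add: r_def)
    next
      case False
      have M: "symd1 (symd1 K h) j \<subseteq> {1..tau}" using symd1_sub[OF symd1_sub[OF K hj(1)] hj(2)] .
      have "Y j h (symd1 (symd1 K j) h) = Y h j (symd1 (symd1 K h) j)"
        using symY[OF hj(2) hj(1), of "symd1 (symd1 K h) j"] M by (simp add: symd1_comm[of K j h])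
      then show ?thesis using False sign_swap[OF fin False] by (simp add: r_def f_def)
    qed
  qed simp
  also have "(\<Sum>h=1..tau. \<Sum>j=1..tau. d h j) = (\<Sum>h=1..tau. f h h)"
    by (simp add: d_def)
  also have "\<dots> = (\<Sum>h=1..tau. - Y h h K)"
    by (intro sum.cong refl) (simp add: f_def sign_diag[OF fin])
  finally show ?thesis unfolding f_def by (simp add: sum_negf)
qed



definition opT :: "(nat \<Rightarrow> 'a::real_normed_algebra_1) \<Rightarrow> nat \<Rightarrow> nat \<Rightarrow> nat \<Rightarrow> (nat set \<Rightarrow> pt \<Rightarrow> 'a) \<Rightarrow> nat set \<Rightarrow> pt \<Rightarrow> 'a" where
  "opT v t0 tau u F L q = dbaru v t0 (card L + u) (F L) q +
     (\<Sum>h=1..tau. ((-1::real) ^ (sgm h L + u)) *\<^sub>R pd (CB h) (F (symd1 L h)) q)"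

lemma dbarT_opT: "dbarT v t0 tau F = opT v t0 tau 1 F"
  by (intro ext) (simp add: dbarT_def opT_def)

lemma dT_opT: "dT v t0 tau F = opT v t0 tau 0 F"
  by (intro ext) (simp add: dT_def opT_def)

lemma coords_CA: "s \<le> t0 \<Longrightarrow> CA s \<in> coords t0 tau"
  by (simp add: coords_def)
lemma coords_CB: "h \<in> {1..tau} \<Longrightarrow> CB h \<in> coords t0 tau"
  by (simp add: coords_def)

lemma pd_opT:
  fixes F :: "nat set \<Rightarrow> pt \<Rightarrow> 'a::real_normed_algebra_1"
  assumes hp: "\<And>c c' M. c \<in> coords t0 tau \<Longrightarrow> c' \<in> coords t0 tau \<Longrightarrow> M \<subseteq> {1..tau} \<Longrightarrow> has_pd c (pd c' (F M)) p"
    and c: "c \<in> coords t0 tau" and L: "L \<subseteq> {1..tau}"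
  shows "pd c (opT v t0 tau u F L) p = pd c (pd (CA 0) (F L)) p
      - ((-1::real) ^ (card L + u)) *\<^sub>R (\<Sum>s=1..t0. v s * pd c (pd (CA s) (F L)) p)
      + (\<Sum>j=1..tau. ((-1::real) ^ (sgm j L + u)) *\<^sub>R pd c (pd (CB j) (F (symd1 L j))) p)"
proof -
  define r where "r = ((-1::real) ^ (card L + u))"
  define A where "A = pd (CA 0) (F L)"
  define B where "B = (\<lambda>q. \<Sum>s=1..t0. v s * pd (CA s) (F L) q)"
  define C where "C = (\<lambda>q. \<Sum>h=1..tau. ((-1::real) ^ (sgm h L + u)) *\<^sub>R pd (CB h) (F (symd1 L h)) q)"
  have eq: "opT v t0 tau u F L = (\<lambda>q. (A q - r *\<^sub>R B q) + C q)"
    by (intro ext) (simp add: opT_def dbaru_def A_def B_def C_def r_def)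
  have hA: "has_pd c A p" unfolding A_def by (rule hp[OF c coords_CA L]) simp
  have hB1: "has_pd c (pd (CA s) (F L)) p" if "s \<in> {1..t0}" for s
    using that by (intro hp[OF c coords_CA L]) simp
  have hB2: "has_pd c (\<lambda>q. v s * pd (CA s) (F L) q) p" if "s \<in> {1..t0}" for s
    by (rule pd_mult_left(1)[OF hB1[OF that]])
  have hB: "has_pd c B p \<and> pd c B p = (\<Sum>s=1..t0. pd c (\<lambda>q. v s * pd (CA s) (F L) q) p)"
    unfolding B_def by (rule pd_sum) (auto intro: hB2)
  have pB: "pd c B p = (\<Sum>s=1..t0. v s * pd c (pd (CA s) (F L)) p)"
    using hB by (simp add: pd_mult_left(2)[OF hB1])
  have hC1: "has_pd c (pd (CB h) (F (symd1 L h))) p" if "h \<in> {1..tau}" for h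
    using that by (intro hp[OF c coords_CB symd1_sub[OF L]])
  have hC2: "has_pd c (\<lambda>q. ((-1::real) ^ (sgm h L + u)) *\<^sub>R pd (CB h) (F (symd1 L h)) q) p" if "h \<in> {1..tau}" for h
    by (rule pd_scaleR(1)[OF hC1[OF that]])
  have hC: "has_pd c C p \<and> pd c C p = (\<Sum>h=1..tau. pd c (\<lambda>q. ((-1::real) ^ (sgm h L + u)) *\<^sub>R pd (CB h) (F (symd1 L h)) q) p)"
    unfolding C_def by (rule pd_sum) (auto intro: hC2)
  have pC: "pd c C p = (\<Sum>j=1..tau. ((-1::real) ^ (sgm j L + u)) *\<^sub>R pd c (pd (CB j) (F (symd1 L j))) p)"
    using hC by (simp add: pd_scaleR(2)[OF hC1])
  have hrB: "has_pd c (\<lambda>q. r *\<^sub>R B q) p" using pd_scaleR(1) hB by blast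
  have hAB: "has_pd c (\<lambda>q. A q - r *\<^sub>R B q) p" using pd_diff(1)[OF hA hrB] .
  have "pd c (opT v t0 tau u F L) p = pd c (\<lambda>q. A q - r *\<^sub>R B q) p + pd c C p"
    unfolding eq using pd_add(2)[OF hAB conjunct1[OF hC]] .
  also have "pd c (\<lambda>q. A q - r *\<^sub>R B q) p = pd c A p - r *\<^sub>R pd c B p"
    using pd_diff(2)[OF hA hrB] pd_scaleR(2)[OF conjunct1[OF hB]] by simp
  finally show ?thesis by (simp add: pB pC A_def r_def)
qed

lemma pd_dbarA:
  fixes F :: "nat set \<Rightarrow> pt \<Rightarrow> 'a::real_normed_algebra_1"
  assumes hp: "\<And>c c' M. c \<in> coords t0 tau \<Longrightarrow> c' \<in> coords t0 tau \<Longrightarrow> M \<subseteq> {1..tau} \<Longrightarrow> has_pd c (pd c' (F M)) p"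
    and c: "c \<in> coords t0 tau" and L: "L \<subseteq> {1..tau}"
  shows "pd c (dbarA v t0 (F L)) p = pd c (pd (CA 0) (F L)) p + (\<Sum>s=1..t0. v s * pd c (pd (CA s) (F L)) p)"
proof -
  define A where "A = pd (CA 0) (F L)"
  define B where "B = (\<lambda>q. \<Sum>s=1..t0. v s * pd (CA s) (F L) q)"
  have eq: "dbarA v t0 (F L) = (\<lambda>q. A q + B q)"
    by (intro ext) (simp add: dbarA_def A_def B_def)
  have hA: "has_pd c A p" unfolding A_def by (rule hp[OF c coords_CA L]) simp
  have hB1: "has_pd c (pd (CA s) (F L)) p" if "s \<in> {1..t0}" for s
    using that by (intro hp[OF c coords_CA L]) simp
  have hB2: "has_pd c (\<lambda>q. v s * pd (CA s) (F L) q) p" if "s \<in> {1..t0}" for s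
    by (rule pd_mult_left(1)[OF hB1[OF that]])
  have hB: "has_pd c B p \<and> pd c B p = (\<Sum>s=1..t0. pd c (\<lambda>q. v s * pd (CA s) (F L) q) p)"
    unfolding B_def by (rule pd_sum) (auto intro: hB2)
  have pB: "pd c B p = (\<Sum>s=1..t0. v s * pd c (pd (CA s) (F L)) p)"
    using hB by (simp add: pd_mult_left(2)[OF hB1])
  show ?thesis unfolding eq using pd_add(2)[OF hA conjunct1[OF hB]] pB by (simp add: A_def)
qed



lemma sum_sign_u:
  "(\<Sum>j\<in>J. ((-1::real) ^ (f j + u)) *\<^sub>R g j) = ((-1::real) ^ u) *\<^sub>R (\<Sum>j\<in>J. ((-1::real) ^ f j) *\<^sub>R (g j :: 'a::real_vector))"
  by (simp add: power_add scaleR_sum_right mult.commute)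

lemma neg1_cases: "(-1::real) ^ n = 1 \<or> (-1::real) ^ n = -1"
  by (simp add: minus_one_power_iff)

lemma alg_identity:
  fixes X :: "coord \<Rightarrow> coord \<Rightarrow> nat set \<Rightarrow> 'a::real_normed_algebra_1"
    and W :: "coord \<Rightarrow> nat set \<Rightarrow> 'a" and v :: "nat \<Rightarrow> 'a"
  assumes K: "K \<subseteq> {1..tau}"
    and sym: "\<And>c c' L. c \<in> coords t0 tau \<Longrightarrow> c' \<in> coords t0 tau \<Longrightarrow> L \<subseteq> {1..tau} \<Longrightarrow> X c c' L = X c' c L"
    and uu: "odd (u + u')"
    and Wdef: "\<And>c L. c \<in> coords t0 tau \<Longrightarrow> L \<subseteq> {1..tau} \<Longrightarrow> W c L = X c (CA 0) L
        - ((-1::real) ^ (card L + u)) *\<^sub>R (\<Sum>s=1..t0. v s * X c (CA s) L)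
        + (\<Sum>j=1..tau. ((-1::real) ^ (sgm j L + u)) *\<^sub>R X c (CB j) (symd1 L j))"
  shows "W (CA 0) K - ((-1::real) ^ (card K + u')) *\<^sub>R (\<Sum>s=1..t0. v s * W (CA s) K)
      + (\<Sum>h=1..tau. ((-1::real) ^ (sgm h K + u')) *\<^sub>R W (CB h) (symd1 K h))
    = (X (CA 0) (CA 0) K + (\<Sum>s=1..t0. v s * X (CA 0) (CA s) K))
      - (\<Sum>s=1..t0. v s * (X (CA s) (CA 0) K + (\<Sum>r=1..t0. v r * X (CA s) (CA r) K)))
      + (\<Sum>h=1..tau. X (CB h) (CB h) K)"
proof -
  have fin: "finite K" using K finite_subset by blast
  define e where "e = (-1::real) ^ (card K + u')"
  define au where "au = (-1::real) ^ u"
  have au': "(-1::real) ^ u' = - au" unfolding au_def by (rule odd_sign) (use uu in simp)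
  have e1: "(-1::real) ^ (card K + u) = - e"
    unfolding e_def power_add using odd_sign[OF uu] by simp
  have e2: "(-1::real) ^ (card (symd1 K h) + u) = e" for h
    unfolding e_def power_add using odd_sign[OF uu] card_symd1_sign[OF fin, of h] by simp
  define \<sigma> where "\<sigma> h = (-1::real) ^ sgm h K" for h
  define B1 where "B1 = (\<Sum>s=1..t0. v s * X (CA 0) (CA s) K)"
  define B2 where "B2 = (\<Sum>s=1..t0. v s * X (CA s) (CA 0) K)"
  define Bs where "Bs s = (\<Sum>r=1..t0. v r * X (CA s) (CA r) K)" for s
  define Q where "Q = (\<Sum>s=1..t0. v s * Bs s)"
  define C1 where "C1 = (\<Sum>j=1..tau. \<sigma> j *\<^sub>R X (CA 0) (CB j) (symd1 K j))"
  define C2 where "C2 = (\<Sum>h=1..tau. \<sigma> h *\<^sub>R X (CB h) (CA 0) (symd1 K h))"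
  define Cs where "Cs s = (\<Sum>j=1..tau. \<sigma> j *\<^sub>R X (CA s) (CB j) (symd1 K j))" for s
  define E1 where "E1 = (\<Sum>s=1..t0. v s * Cs s)"
  define Eh where "Eh h = (\<Sum>s=1..t0. v s * X (CB h) (CA s) (symd1 K h))" for h
  define E2 where "E2 = (\<Sum>h=1..tau. \<sigma> h *\<^sub>R Eh h)"
  define Zh where "Zh h = (\<Sum>j=1..tau. ((-1::real) ^ sgm j (symd1 K h)) *\<^sub>R X (CB h) (CB j) (symd1 (symd1 K h) j))" for h
  define Z where "Z = (\<Sum>h=1..tau. \<sigma> h *\<^sub>R Zh h)"
  define Y where "Y = (\<Sum>h=1..tau. X (CB h) (CB h) K)"
  have c0: "CA 0 \<in> coords t0 tau" by (simp add: coords_def)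
  have W0: "W (CA 0) K = X (CA 0) (CA 0) K + e *\<^sub>R B1 + au *\<^sub>R C1"
    using Wdef[OF c0 K] by (simp add: e1 sum_sign_u B1_def C1_def au_def \<sigma>_def)
  have Ws: "W (CA s) K = X (CA s) (CA 0) K + e *\<^sub>R Bs s + au *\<^sub>R Cs s" if "s \<in> {1..t0}" for s
    using Wdef[OF coords_CA K, of s] that by (simp add: e1 sum_sign_u Bs_def Cs_def au_def \<sigma>_def)
  have SW: "(\<Sum>s=1..t0. v s * W (CA s) K) = B2 + e *\<^sub>R Q + au *\<^sub>R E1"
  proof -
    have "(\<Sum>s=1..t0. v s * W (CA s) K) = (\<Sum>s=1..t0. v s * X (CA s) (CA 0) K + e *\<^sub>R (v s * Bs s) + au *\<^sub>R (v s * Cs s))"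
      by (intro sum.cong refl) (simp add: Ws distrib_left)
    also have "\<dots> = B2 + e *\<^sub>R Q + au *\<^sub>R E1"
      by (simp add: sum.distrib scaleR_sum_right B2_def Q_def E1_def)
    finally show ?thesis .
  qed
  have Wh: "W (CB h) (symd1 K h) = X (CB h) (CA 0) (symd1 K h) - e *\<^sub>R Eh h + au *\<^sub>R Zh h" if "h \<in> {1..tau}" for h
    using Wdef[OF coords_CB[OF that] symd1_sub[OF K that]] that
    by (simp add: e2 sum_sign_u Eh_def Zh_def au_def)
  have SH: "(\<Sum>h=1..tau. ((-1::real) ^ (sgm h K + u')) *\<^sub>R W (CB h) (symd1 K h)) = - (au *\<^sub>R C2) + (au * e) *\<^sub>R E2 - (au * au) *\<^sub>R Z"
  proof -
    have "(\<Sum>h=1..tau. ((-1::real) ^ (sgm h K + u')) *\<^sub>R W (CB h) (symd1 K h))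
        = (\<Sum>h=1..tau. - (au *\<^sub>R (\<sigma> h *\<^sub>R X (CB h) (CA 0) (symd1 K h))) + (au * e) *\<^sub>R (\<sigma> h *\<^sub>R Eh h) - (au * au) *\<^sub>R (\<sigma> h *\<^sub>R Zh h))"
    proof (intro sum.cong refl)
      fix h assume h: "h \<in> {1..tau}"
      have s: "(-1::real) ^ (sgm h K + u') = - (au * \<sigma> h)" by (simp add: power_add au' \<sigma>_def)
      show "((-1::real) ^ (sgm h K + u')) *\<^sub>R W (CB h) (symd1 K h) = - (au *\<^sub>R (\<sigma> h *\<^sub>R X (CB h) (CA 0) (symd1 K h))) + (au * e) *\<^sub>R (\<sigma> h *\<^sub>R Eh h) - (au * au) *\<^sub>R (\<sigma> h *\<^sub>R Zh h)"
        unfolding s Wh[OF h] by (simp add: algebra_simps)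
    qed
    also have "\<dots> = - (au *\<^sub>R C2) + (au * e) *\<^sub>R E2 - (au * au) *\<^sub>R Z"
      by (simp add: sum.distrib sum_subtractf sum_negf scaleR_sum_right C2_def E2_def Z_def)
    finally show ?thesis .
  qed
  have B12: "B1 = B2" unfolding B1_def B2_def
    by (intro sum.cong refl) (simp add: sym[OF c0 coords_CA K])
  have C12: "C1 = C2" unfolding C1_def C2_def
    by (intro sum.cong refl) (simp add: sym[OF c0 coords_CB symd1_sub[OF K]])
  have E12: "E1 = E2"
  proof -
    have "E1 = (\<Sum>s=1..t0. \<Sum>j=1..tau. \<sigma> j *\<^sub>R (v s * X (CA s) (CB j) (symd1 K j)))"
      by (simp add: E1_def Cs_def sum_distrib_left)
    also have "\<dots> = (\<Sum>j=1..tau. \<Sum>s=1..t0. \<sigma> j *\<^sub>R (v s * X (CA s) (CB j) (symd1 K j)))"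
      by (rule sum.swap)
    also have "\<dots> = (\<Sum>h=1..tau. \<Sum>s=1..t0. \<sigma> h *\<^sub>R (v s * X (CB h) (CA s) (symd1 K h)))"
      by (intro sum.cong refl) (simp add: sym[OF coords_CA coords_CB symd1_sub[OF K]])
    also have "\<dots> = E2"
      by (simp add: E2_def Eh_def scaleR_sum_right)
    finally show ?thesis .
  qed
  have ZY: "Z = - Y"
  proof -
    have "Z = (\<Sum>h=1..tau. \<Sum>j=1..tau. (-1::real) ^ (sgm h K + sgm j (symd1 K h)) *\<^sub>R X (CB h) (CB j) (symd1 (symd1 K h) j))"
      by (simp add: Z_def Zh_def scaleR_sum_right \<sigma>_def power_add)
    also have "\<dots> = - Y" unfolding Y_def
      by (rule double_sum[OF K]) (rule sym[OF coords_CB coords_CB]; simp)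
    finally show ?thesis .
  qed
  have RHS: "(\<Sum>s=1..t0. v s * (X (CA s) (CA 0) K + (\<Sum>r=1..t0. v r * X (CA s) (CA r) K))) = B2 + Q"
    by (simp add: distrib_left sum.distrib B2_def Q_def Bs_def)
  have ee: "e = 1 \<or> e = -1" unfolding e_def by (rule neg1_cases)
  have aa: "au = 1 \<or> au = -1" unfolding au_def by (rule neg1_cases)
  show ?thesis
    unfolding e_def[symmetric] W0 SW SH RHS B1_def[symmetric] Y_def[symmetric]
    unfolding B12 C12 E12 ZY
    using ee aa by (elim disjE) (simp_all add: algebra_simps)
qed



lemma opT_unfold:
  "opT v t0 tau u F K p = pd (CA 0) (F K) p - ((-1::real) ^ (card K + u)) *\<^sub>R (\<Sum>s=1..t0. v s * pd (CA s) (F K) p)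
     + (\<Sum>h=1..tau. ((-1::real) ^ (sgm h K + u)) *\<^sub>R pd (CB h) (F (symd1 K h)) p)"
  by (simp add: opT_def dbaru_def)

theorem lemma3p5:
  fixes v :: "nat \<Rightarrow> 'a::real_normed_algebra_1"
    and cj :: "'a \<Rightarrow> 'a"
    and N tau :: nat and t :: "nat \<Rightarrow> nat"
    and D :: "pt set"
    and F :: "nat set \<Rightarrow> pt \<Rightarrow> 'a"
  assumes fin_dim: "\<exists>B::'a set. finite B \<and> span B = UNIV"
    and inv_linear: "linear cj"
    and inv_mult: "\<And>x y. cj (x * y) = cj y * cj x"
    and inv_inv: "\<And>x. cj (cj x) = x"
    and v0: "v 0 = 1"
    and v_sq: "\<And>s. 1 \<le> s \<Longrightarrow> s \<le> N \<Longrightarrow> v s * v s = - 1"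
    and v_anti: "\<And>r s. 1 \<le> r \<Longrightarrow> r \<le> N \<Longrightarrow> 1 \<le> s \<Longrightarrow> s \<le> N \<Longrightarrow> r \<noteq> s
                   \<Longrightarrow> v r * v s = - (v s * v r)"
    and v_basis: "inj_on v {0..N}" "independent (v ` {0..N})"
    and T_mono: "strict_mono_on {0..tau} t"
    and T_last: "t tau = N"
    and D_sub: "D \<subseteq> stem_space (t 0) tau"
    and D_open: "openin (top_of_set (stem_space (t 0) tau)) D"
    and D_inv: "\<And>x b h. (x, b) \<in> D \<Longrightarrow> h \<in> {1..tau} \<Longrightarrow> (x, b(h := - b h)) \<in> D"
    and F_stem: "stem2 (t 0) tau D F"
  shows "\<forall>K. K \<subseteq> {1..tau} \<longrightarrow> (\<forall>p\<in>D.
           LapT v (t 0) tau F K p = dT v (t 0) tau (dbarT v (t 0) tau F) K p \<and>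
           LapT v (t 0) tau F K p = dbarT v (t 0) tau (dT v (t 0) tau F) K p)"
proof (intro allI impI ballI)
  fix K p assume K: "K \<subseteq> {1..tau}" and p: "p \<in> D"
  have C2all: "C2_on (t 0) tau D (F M)" if "M \<subseteq> {1..tau}" for M
    using F_stem that unfolding stem2_def by blast
  have hp: "has_pd c (pd c' (F M)) p"
    if "c \<in> coords (t 0) tau" "c' \<in> coords (t 0) tau" "M \<subseteq> {1..tau}" for c c' M
    using C2D(2)[OF C2all[OF that(3)] that(2) that(1) p] .
  have sym: "pd c (pd c' (F M)) p = pd c' (pd c (F M)) p"
    if "c \<in> coords (t 0) tau" "c' \<in> coords (t 0) tau" "M \<subseteq> {1..tau}" for c c' M
    using pd_swap[OF D_sub D_open C2all[OF that(3)] that(1) that(2) p] .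
  have c0: "CA 0 \<in> coords (t 0) tau" by (simp add: coords_def)
  have Lap: "LapT v (t 0) tau F K p =
      (pd (CA 0) (pd (CA 0) (F K)) p + (\<Sum>s=1..t 0. v s * pd (CA 0) (pd (CA s) (F K)) p))
      - (\<Sum>s=1..t 0. v s * (pd (CA s) (pd (CA 0) (F K)) p + (\<Sum>r=1..t 0. v r * pd (CA s) (pd (CA r) (F K)) p)))
      + (\<Sum>h=1..tau. pd (CB h) (pd (CB h) (F K)) p)"
  proof -
    have "(\<Sum>s=1..t 0. v s * pd (CA s) (dbarA v (t 0) (F K)) p)
        = (\<Sum>s=1..t 0. v s * (pd (CA s) (pd (CA 0) (F K)) p + (\<Sum>r=1..t 0. v r * pd (CA s) (pd (CA r) (F K)) p)))"
    proof (intro sum.cong refl)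
      fix s assume "s \<in> {1..t 0}"
      then have cs: "CA s \<in> coords (t 0) tau" by (simp add: coords_def)
      show "v s * pd (CA s) (dbarA v (t 0) (F K)) p = v s * (pd (CA s) (pd (CA 0) (F K)) p + (\<Sum>r=1..t 0. v r * pd (CA s) (pd (CA r) (F K)) p))"
        using pd_dbarA[where F=F and p=p, OF hp cs K] by simp
    qed
    then show ?thesis
      unfolding LapT_def dA_def using pd_dbarA[where F=F and p=p and v=v, OF hp c0 K] by simp
  qed
  have gen: "opT v (t 0) tau u' (opT v (t 0) tau u F) K p = LapT v (t 0) tau F K p"
    if uu: "odd (u + u')" for u u'
    unfolding Lap opT_unfold[of v "t 0" tau u']
  proof (rule alg_identity[where X = "\<lambda>c c' L. pd c (pd c' (F L)) p"
        and W = "\<lambda>c L. pd c (opT v (t 0) tau u F L) p", OF K _ uu])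
    fix c c' L assume "c \<in> coords (t 0) tau" "c' \<in> coords (t 0) tau" "L \<subseteq> {1..tau}"
    then show "pd c (pd c' (F L)) p = pd c' (pd c (F L)) p" by (rule sym)
  next
    fix c L assume cL: "c \<in> coords (t 0) tau" "L \<subseteq> {1..tau}"
    show "pd c (opT v (t 0) tau u F L) p = pd c (pd (CA 0) (F L)) p
        - ((-1::real) ^ (card L + u)) *\<^sub>R (\<Sum>s=1..t 0. v s * pd c (pd (CA s) (F L)) p)
        + (\<Sum>j=1..tau. ((-1::real) ^ (sgm j L + u)) *\<^sub>R pd c (pd (CB j) (F (symd1 L j))) p)"
      by (rule pd_opT[where F=F and p=p and v=v and u=u and tau=tau, OF hp cL])
  qed
  show "LapT v (t 0) tau F K p = dT v (t 0) tau (dbarT v (t 0) tau F) K p \<and>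
        LapT v (t 0) tau F K p = dbarT v (t 0) tau (dT v (t 0) tau F) K p"
    unfolding dT_opT dbarT_opT using gen[of 1 0] gen[of 0 1] by simp
qed

end
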